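(* Let $X=\{X(t),\ t\ge 0\}$ be a stochastic process and suppose that for every $q\in\mathbb{R}$ the limit $$\tau(q)=\lim_{t\to\infty}\frac{\log \mathbb{E}|X(t)|^q}{\log t}$$ exists in $(-\infty,+\infty]$ (with $\tau(q)=+\infty$ if $\mathbb{E}|X(t)|^q=\infty$ for all large $t$). Let $\mathcal{D}_\tau=\{q\in\mathbb{R}:\tau(q)<\infty\}$. Then: (i) $\tau$ is convex. (ii) $q\mapsto \tau(q)/q$ is nondecreasing on $\mathcal{D}_\tau\setminus\{0\}$. (iii) If $\tau(q')\ge 0$ for some $q'>0$, then $\tau(q)\ge 0$ for every $q\ge q'$ and $\tau$ is nondecreasing on $\mathcal{D}_\tau\cap[q',\infty)$. In particular, if $\tau(q)\ge 0$ for every $q>0$, then $\tau$ is nondecreasing on $\mathcal{D}_\tau\cap[0,\infty)$. (iv) For every $q<0$, $$\tau(q)\ \ge\ q\,\inf_{q'>0}\frac{\tau(q')}{q'}.$$ In particular, $\tau(q)\ge -\tau(-q)$ for every $q<0$.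
   Context: $\tau$ is called the scaling function of $X$; note $\tau(0)=0$. Absolute moments of negative order $\mathbb{E}|X(t)|^q$, $q<0$, are allowed and may be infinite. *)

theory Defs
  imports "HOL-Probability.Probability"
begin

definition abs_pow_enn :: "real \<Rightarrow> real \<Rightarrow> ennreal" where
  "abs_pow_enn q x =
     (if x = 0 then (if q < 0 then \<infinity> else if q = 0 then 1 else 0)
      else ennreal (\<bar>x\<bar> powr q))"

definition abs_moment :: "'a measure \<Rightarrow> ('a \<Rightarrow> real) \<Rightarrow> real \<Rightarrow> ennreal" where
  "abs_moment M Y q = (\<integral>\<^sup>+ \<omega>. abs_pow_enn q (Y \<omega>) \<partial>M)"

definition log_moment_ratio :: "'a measure \<Rightarrow> ('a \<Rightarrow> real) \<Rightarrow> real \<Rightarrow> real \<Rightarrow> ereal" where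
  "log_moment_ratio M Y q t =
     (let m = abs_moment M Y q in
      if m = \<infinity> then \<infinity>
      else if m = 0 then -\<infinity>
      else ereal (ln (enn2real m) / ln t))"

end

theory Submission
  imports Defs
begin


locale cvx =
  fixes \<tau> :: "real \<Rightarrow> ereal"
  assumes cv: "\<And>x y l. 0 < l \<Longrightarrow> l < 1 \<Longrightarrow>
        \<tau> ((1 - l) * x + l * y) \<le> ereal (1 - l) * \<tau> x + ereal l * \<tau> y"
    and z: "\<tau> 0 = 0"
    and nm: "\<And>q. \<tau> q \<noteq> -\<infinity>"
begin

lemma cvr:
  assumes "0 < l" "l < 1" "\<tau> x = ereal a" "\<tau> y = ereal b"
  shows "real_of_ereal (\<tau> ((1 - l) * x + l * y)) \<le> (1-l)*a + l*b"
    and "\<tau> ((1 - l) * x + l * y) \<noteq> \<infinity>"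
proof -
  have h: "\<tau> ((1 - l) * x + l * y) \<le> ereal ((1-l)*a + l*b)"
    using cv[OF assms(1,2), of x y] assms(3,4) by simp
  then show "\<tau> ((1 - l) * x + l * y) \<noteq> \<infinity>" by auto
  then obtain c where "\<tau> ((1 - l) * x + l * y) = ereal c" using nm
    by (cases "\<tau> ((1 - l) * x + l * y)") auto
  with h show "real_of_ereal (\<tau> ((1 - l) * x + l * y)) \<le> (1-l)*a + l*b" by simp
qed

lemma z': "\<tau> 0 = ereal 0" using z by (simp add: zero_ereal_def)

lemma up_inf:
  assumes "0 < p" "p \<le> q" "\<tau> p = \<infinity>" shows "\<tau> q = \<infinity>"
proof (cases "p = q")
  case False
  then have l: "0 < p/q" "p/q < 1" using assms by auto
  have e: "(1 - p/q) * 0 + (p/q) * q = p" using assms by auto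
  show ?thesis
  proof (rule ccontr)
    assume "\<tau> q \<noteq> \<infinity>"
    then obtain b where "\<tau> q = ereal b" using nm by (cases "\<tau> q") auto
    from cvr(2)[OF l, of 0 0 q b] this z e assms(3) show False by simp
  qed
qed (use assms in auto)

lemma slope:
  assumes "p \<noteq> 0" "q \<noteq> 0" "p \<le> q" "\<tau> p = ereal a" "\<tau> q = ereal b"
  shows "a / p \<le> b / q"
proof -
  consider "0 < p" "p < q" | "p < 0" "0 < q" | "p < q" "q < 0" | "p = q"
    using assms by linarith
  then show ?thesis
  proof cases
    case 1
    then have l: "0 < p/q" "p/q < 1" by auto
    have e: "(1 - p/q) * 0 + (p/q) * q = p" using 1 by auto
    from cvr(1)[OF l, of 0 0 q b] z e assms have "a \<le> p/q*b" by simp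
    then show ?thesis using 1 by (simp add: field_simps)
  next
    case 2
    define l where "l = -p/(q-p)"
    have qp: "q - p > 0" using 2 by simp
    have "p/(q-p) < 0" using 2 qp by (simp add: divide_neg_pos)
    moreover have "-1 < p/(q-p)" using qp 2 by (simp add: field_simps)
    ultimately have l: "0 < l" "l < 1" unfolding l_def by auto
    have e: "(1 - l) * p + l * q = 0" using 2 unfolding l_def by (auto simp: field_simps)
    from cvr(1)[OF l assms(4,5)] z e have "0 \<le> (1-l)*a + l*b" by simp
    have qp': "q - p \<noteq> 0" using qp by simp
    have "(q-p)*(1-l) = q" unfolding l_def using qp' by (simp add: field_simps)
    moreover have "(q-p)*l = -p" unfolding l_def using qp' by (simp add: field_simps)
    moreover have "(q-p)*((1-l)*a + l*b) = ((q-p)*(1-l))*a + ((q-p)*l)*b" by (simp add: distrib_left)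
    ultimately have "(q-p)*((1-l)*a + l*b) = q*a - p*b" by simp
    moreover have "0 \<le> (q-p)*((1-l)*a + l*b)" using qp \<open>0 \<le> (1-l)*a + l*b\<close> by (intro mult_nonneg_nonneg) auto
    ultimately have "0 \<le> q*a - p*b" by simp
    then show ?thesis using 2 by (simp add: field_simps)
  next
    case 3
    define l where "l = 1 - q/p"
    have "0 < q/p" using 3 by (simp add: zero_less_divide_iff)
    moreover have "q/p < 1" using 3 by (simp add: divide_less_eq)
    ultimately have l: "0 < l" "l < 1" unfolding l_def by auto
    have e: "(1 - l) * p + l * 0 = q" using 3 unfolding l_def by (auto simp: field_simps)
    from cvr(1)[OF l assms(4) z'] e assms(5) have "b \<le> (1-l)*a" by simp
    then have "b \<le> q/p*a" unfolding l_def by simp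
    then show ?thesis using 3 by (simp add: field_simps)
  next
    case 4 then show ?thesis using assms by simp
  qed
qed

lemma finD: "\<tau> q < \<infinity> \<Longrightarrow> \<exists>a. \<tau> q = ereal a"
  using nm by (cases "\<tau> q") auto

lemma fin_cases: obtains (inf) "\<tau> q = \<infinity>" | (fin) a where "\<tau> q = ereal a"
  using nm by (cases "\<tau> q") auto

lemma main:
  defines "D \<equiv> {q. \<tau> q < \<infinity>}"
  shows
    "(\<forall>p q. p \<in> D - {0} \<and> q \<in> D - {0} \<and> p \<le> q \<longrightarrow>
        real_of_ereal (\<tau> p) / p \<le> real_of_ereal (\<tau> q) / q)
   \<and> (\<forall>q'>0. \<tau> q' \<ge> 0 \<longrightarrow>
        (\<forall>q\<ge>q'. \<tau> q \<ge> 0) \<and>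
        (\<forall>p q. p \<in> D \<and> q \<in> D \<and> q' \<le> p \<and> p \<le> q \<longrightarrow> \<tau> p \<le> \<tau> q))
   \<and> ((\<forall>q>0. \<tau> q \<ge> 0) \<longrightarrow>
        (\<forall>p q. p \<in> D \<and> q \<in> D \<and> 0 \<le> p \<and> p \<le> q \<longrightarrow> \<tau> p \<le> \<tau> q))
   \<and> (\<forall>q<0. \<tau> q \<ge> ereal q * (INF q'\<in>{0<..}. \<tau> q' / ereal q'))
   \<and> (\<forall>q<0. \<tau> q \<ge> - \<tau> (- q))"
proof -
  have P2: "real_of_ereal (\<tau> p) / p \<le> real_of_ereal (\<tau> q) / q"
    if h: "p \<in> D - {0}" "q \<in> D - {0}" "p \<le> q" for p q
  proof -
    obtain a b where "\<tau> p = ereal a" "\<tau> q = ereal b" using h finD unfolding D_def by blast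
    then show ?thesis using slope[of p q a b] that by simp
  qed
  have P3a: "\<tau> q \<ge> 0" if "q' > 0" "\<tau> q' \<ge> 0" "q \<ge> q'" for q q'
  proof (cases q' rule: fin_cases)
    case inf
    then show ?thesis using up_inf[of q' q] that by simp
  next
    case (fin a)
    show ?thesis
    proof (cases q rule: fin_cases)
      case (fin b)
      have "a/q' \<le> b/q" using slope[of q' q a b] that fin \<open>\<tau> q' = ereal a\<close> by simp
      moreover have "a \<ge> 0" using that \<open>\<tau> q' = ereal a\<close> by simp
      moreover have "a/q' \<ge> 0" using \<open>a \<ge> 0\<close> that by simp
      ultimately have "b/q \<ge> 0" by linarith
      then have "b \<ge> 0" using that by (simp add: zero_le_divide_iff)
      then show ?thesis using fin by simp
    qed simp
  qed
  have P3b: "\<tau> p \<le> \<tau> q" if h: "q' > 0" "\<tau> q' \<ge> 0" "p \<in> D" "q \<in> D" "q' \<le> p" "p \<le> q" for p q q'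
  proof -
    obtain a b where ab: "\<tau> p = ereal a" "\<tau> q = ereal b" using h finD unfolding D_def by blast
    have "a/p \<le> b/q" using slope[of p q a b] that ab by simp
    moreover have "b \<ge> 0" using P3a[of q' q] that ab by simp
    ultimately have "a \<le> p * (b/q)" using that by (simp add: field_simps)
    also have "\<dots> \<le> q * (b/q)" using that \<open>b\<ge>0\<close> by (intro mult_right_mono) auto
    also have "\<dots> = b" using that by simp
    finally show ?thesis using ab by simp
  qed
  have P4: "\<tau> p \<le> \<tau> q" if "\<forall>q>0. \<tau> q \<ge> 0" "p \<in> D" "q \<in> D" "0 \<le> p" "p \<le> q" for p q
  proof (cases "p = 0")
    case True
    then show ?thesis using that z by (cases "q = 0") auto
  next
    case False
    then show ?thesis using P3b[of p p q] that by auto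
  qed
  have P5: "\<tau> q \<ge> ereal q * (INF q'\<in>{0<..}. \<tau> q' / ereal q')" if "q < 0" for q
  proof (cases q rule: fin_cases)
    case (fin a)
    have le: "ereal (a/q) \<le> (INF q'\<in>{0<..}. \<tau> q' / ereal q')"
    proof (rule INF_greatest)
      fix q' :: real assume "q' \<in> {0<..}"
      then have "q' > 0" by simp
      show "ereal (a/q) \<le> \<tau> q' / ereal q'"
      proof (cases q' rule: fin_cases)
        case inf then show ?thesis using \<open>q'>0\<close> by simp
      next
        case (fin b)
        have "a/q \<le> b/q'" using slope[of q q' a b] \<open>q'>0\<close> that fin \<open>\<tau> q = ereal a\<close> by simp
        then show ?thesis using fin \<open>q'>0\<close> by simp
      qed
    qed
    show ?thesis
    proof (cases "INF q'\<in>{0<..}. \<tau> q' / ereal q'" rule: ereal_cases)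
      case (real w)
      then have "a/q \<le> w" using le by simp
      then have "q * w \<le> q * (a/q)" using that by (intro mult_left_mono_neg) auto
      also have "\<dots> = a" using that by simp
      finally have "q * w \<le> a" .
      then show ?thesis using real fin that by simp
    next
      case PInf then show ?thesis using that by simp
    next
      case MInf then show ?thesis using le by simp
    qed
  qed simp
  have P6: "\<tau> q \<ge> - \<tau> (- q)" if "q < 0" for q
  proof (cases q rule: fin_cases)
    case (fin a)
    show ?thesis
    proof (cases "-q" rule: fin_cases)
      case (fin b)
      have "0 \<le> (1 - 1/2) * a + 1/2 * b" using cvr(1)[of "1/2" q a "-q" b] fin \<open>\<tau> q = ereal a\<close> z by simp
      then show ?thesis using fin \<open>\<tau> q = ereal a\<close> by simp
    qed simp
  qed simp
  show ?thesis
    apply (intro conjI allI impI)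
    subgoal for p q using P2[of p q] by blast
    subgoal for q' q using P3a[of q' q] by blast
    subgoal for q' p q using P3b[of q' p q] by blast
    subgoal for p q using P4[of p q] by blast
    subgoal for q using P5[of q] by blast
    subgoal for q using P6[of q] by blast
    done
qed

end


lemma abs_pow_meas[measurable]:
  assumes [measurable]: "Y \<in> borel_measurable M"
  shows "(\<lambda>\<omega>. abs_pow_enn q (Y \<omega>)) \<in> borel_measurable M"
  unfolding abs_pow_enn_def by measurable

lemma abs_pow_pt:
  assumes "abs_pow_enn x y0 \<noteq> \<infinity>" "abs_pow_enn y y0 \<noteq> \<infinity>" "0 < l" "l < 1"
  shows "abs_pow_enn ((1-l)*x+l*y) y0 =
     ennreal (enn2real (abs_pow_enn x y0) powr (1-l) * enn2real (abs_pow_enn y y0) powr l)"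
proof (cases "y0 = 0")
  case False
  then have "\<bar>y0\<bar> powr ((1-l)*x+l*y) = (\<bar>y0\<bar> powr x) powr (1-l) * (\<bar>y0\<bar> powr y) powr l"
    by (simp add: powr_powr powr_add mult.commute)
  then show ?thesis using False by (simp add: abs_pow_enn_def)
next
  case True
  then have "x \<ge> 0" "y \<ge> 0" using assms by (auto simp: abs_pow_enn_def split: if_splits)
  have a: "(1-l)*x \<ge> 0" "l*y \<ge> 0" using \<open>x\<ge>0\<close> \<open>y\<ge>0\<close> assms by auto
  have b: "(1-l)*x + l*y > 0" if "x \<noteq> 0 \<or> y \<noteq> 0"
  proof -
    have "(1-l)*x > 0 \<or> l*y > 0" using that \<open>x\<ge>0\<close> \<open>y\<ge>0\<close> assms by auto
    then show ?thesis using a by linarith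
  qed
  show ?thesis
  proof (cases "x = 0 \<and> y = 0")
    case True then show ?thesis using \<open>y0 = 0\<close> by (simp add: abs_pow_enn_def)
  next
    case False
    then have "(1-l)*x + l*y > 0" using b by blast
    then show ?thesis using \<open>y0 = 0\<close> False \<open>x\<ge>0\<close> \<open>y\<ge>0\<close> assms by (auto simp: abs_pow_enn_def)
  qed
qed

lemma young2:
  fixes u v mA mB l :: real
  assumes "u \<ge> 0" "v \<ge> 0" "mA > 0" "mB > 0" "0 < l" "l < 1"
  shows "u powr (1-l) * v powr l \<le> mA powr (1-l) * mB powr l * ((1-l)/mA*u + l/mB* v)"
proof (cases "u = 0 \<or> v = 0")
  case True
  then have "u powr (1-l) * v powr l = 0" by auto
  moreover have "0 \<le> mA powr (1-l) * mB powr l * ((1-l)/mA*u + l/mB* v)"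
    using assms by (intro mult_nonneg_nonneg add_nonneg_nonneg) auto
  ultimately show ?thesis by linarith
next
  case False
  then have "u > 0" "v > 0" using assms by auto
  have "(u/mA) powr (1-l) * (v/mB) powr l \<le> (1-l)*(u/mA) + l*(v/mB)"
    using Youngs_inequality_0[of "1-l" l "u/mA" "v/mB"] assms \<open>u>0\<close> \<open>v>0\<close> by simp
  also have "(u/mA) powr (1-l) * (v/mB) powr l = (u powr (1-l) * v powr l) / (mA powr (1-l) * mB powr l)"
    by (simp add: powr_divide)
  finally have "(u powr (1-l) * v powr l) / (mA powr (1-l) * mB powr l) \<le> (1-l)/mA*u + l/mB* v" by simp
  moreover have "mA powr (1-l) * mB powr l > 0" using assms by simp
  ultimately show ?thesis by (simp add: divide_le_eq mult.commute)
qed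

lemma moment_holder:
  assumes [measurable]: "Y \<in> borel_measurable M" and l: "0 < l" "l < 1"
    and hA: "abs_moment M Y x = ennreal mA" "mA > 0"
    and hB: "abs_moment M Y y = ennreal mB" "mB > 0"
  shows "abs_moment M Y ((1-l)*x+l*y) \<le> ennreal (mA powr (1-l) * mB powr l)"
proof -
  define C where "C = mA powr (1-l) * mB powr l"
  have C: "C \<ge> 0" unfolding C_def by simp
  have aef: "AE \<omega> in M. abs_pow_enn x (Y \<omega>) \<noteq> \<infinity>"
    using hA by (intro nn_integral_PInf_AE) (auto simp: abs_moment_def)
  have aeg: "AE \<omega> in M. abs_pow_enn y (Y \<omega>) \<noteq> \<infinity>"
    using hB by (intro nn_integral_PInf_AE) (auto simp: abs_moment_def)
  have "abs_moment M Y ((1-l)*x+l*y) \<le> (\<integral>\<^sup>+\<omega>. ennreal C * (ennreal ((1-l)/mA) * abs_pow_enn x (Y \<omega>)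
           + ennreal (l/mB) * abs_pow_enn y (Y \<omega>)) \<partial>M)"
    unfolding abs_moment_def
  proof (rule nn_integral_mono_AE)
    show "AE \<omega> in M. abs_pow_enn ((1-l)*x+l*y) (Y \<omega>) \<le> ennreal C * (ennreal ((1-l)/mA) * abs_pow_enn x (Y \<omega>)
           + ennreal (l/mB) * abs_pow_enn y (Y \<omega>))"
      using aef aeg
    proof eventually_elim
      case (elim \<omega>)
      define u where "u = enn2real (abs_pow_enn x (Y \<omega>))"
      define v where "v = enn2real (abs_pow_enn y (Y \<omega>))"
      have u: "abs_pow_enn x (Y \<omega>) = ennreal u" "u \<ge> 0" unfolding u_def using elim by (auto simp: less_top)
      have v: "abs_pow_enn y (Y \<omega>) = ennreal v" "v \<ge> 0" unfolding v_def using elim by (auto simp: less_top)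
      have "abs_pow_enn ((1-l)*x+l*y) (Y \<omega>) = ennreal (u powr (1-l) * v powr l)"
        using abs_pow_pt[OF elim l] unfolding u_def v_def .
      also have "\<dots> \<le> ennreal (C * ((1-l)/mA*u + l/mB* v))"
        using young2[OF u(2) v(2) hA(2) hB(2) l] unfolding C_def by (rule ennreal_leI)
      also have "\<dots> = ennreal C * (ennreal ((1-l)/mA) * ennreal u + ennreal (l/mB) * ennreal v)"
      proof -
        have n: "(1-l)/mA*u \<ge> 0" "l/mB * v \<ge> 0" "(1-l)/mA \<ge> 0" "l/mB \<ge> 0"
          using u(2) v(2) l hA(2) hB(2) by auto
        have "ennreal (C * ((1-l)/mA*u + l/mB * v)) = ennreal C * ennreal ((1-l)/mA*u + l/mB * v)"
          using C n by (intro ennreal_mult) auto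
        also have "ennreal ((1-l)/mA*u + l/mB * v) = ennreal ((1-l)/mA*u) + ennreal (l/mB * v)"
          using n by (intro ennreal_plus) auto
        also have "ennreal ((1-l)/mA*u) = ennreal ((1-l)/mA) * ennreal u"
          using n u(2) by (intro ennreal_mult) auto
        also have "ennreal (l/mB* v) = ennreal (l/mB) * ennreal v"
          using n v(2) by (intro ennreal_mult) auto
        finally show ?thesis .
      qed
      finally show ?case using u v by simp
    qed
  qed
  also have "\<dots> = ennreal C * (ennreal ((1-l)/mA) * ennreal mA + ennreal (l/mB) * ennreal mB)"
    using hA hB by (simp add: nn_integral_cmult nn_integral_add abs_moment_def)
  also have "\<dots> = ennreal C"
  proof -
    have "ennreal ((1-l)/mA) * ennreal mA = ennreal (1-l)"
      using hA(2) l by (subst ennreal_mult[symmetric]) auto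
    moreover have "ennreal (l/mB) * ennreal mB = ennreal l"
      using hB(2) l by (subst ennreal_mult[symmetric]) auto
    moreover have "ennreal (1-l) + ennreal l = 1"
      using l by (subst ennreal_plus[symmetric]) auto
    ultimately show ?thesis by simp
  qed
  finally show ?thesis unfolding C_def .
qed



lemma ratio_le:
  assumes [measurable]: "Y \<in> borel_measurable M" and t: "t > 1" and l: "0 < l" "l < 1"
    and hA: "abs_moment M Y x = ennreal mA" "mA > 0"
    and hB: "abs_moment M Y y = ennreal mB" "mB > 0"
  shows "log_moment_ratio M Y ((1-l)*x+l*y) t \<le>
     ereal (1-l) * log_moment_ratio M Y x t + ereal l * log_moment_ratio M Y y t"
proof -
  have lt: "ln t > 0" using t by simp
  have rx: "log_moment_ratio M Y x t = ereal (ln mA / ln t)"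
    using hA by (simp add: log_moment_ratio_def)
  have ry: "log_moment_ratio M Y y t = ereal (ln mB / ln t)"
    using hB by (simp add: log_moment_ratio_def)
  have H: "abs_moment M Y ((1-l)*x+l*y) \<le> ennreal (mA powr (1-l) * mB powr l)"
    by (rule moment_holder[OF assms(1) l hA hB])
  define m where "m = abs_moment M Y ((1-l)*x+l*y)"
  have RHS: "ereal (1-l) * log_moment_ratio M Y x t + ereal l * log_moment_ratio M Y y t
     = ereal (((1-l) * ln mA + l * ln mB) / ln t)"
    unfolding rx ry by (simp add: add_divide_distrib)
  show ?thesis
  proof (cases "m = 0")
    case True
    then show ?thesis unfolding RHS by (simp add: log_moment_ratio_def m_def[symmetric])
  next
    case False
    have mt: "m < top" using H unfolding m_def[symmetric] using ennreal_less_top order.strict_trans1 by blast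
    define m' where "m' = enn2real m"
    have m': "m = ennreal m'" "m' > 0" unfolding m'_def using mt False
      by (auto simp: enn2real_positive_iff zero_less_iff_neq_zero)
    have "m' \<le> mA powr (1-l) * mB powr l" using H m' unfolding m_def[symmetric]
      by (simp add: ennreal_le_iff2)
    then have "ln m' \<le> ln (mA powr (1-l) * mB powr l)" using m' by simp
    also have "\<dots> = (1-l) * ln mA + l * ln mB" using hA(2) hB(2) by (simp add: ln_mult ln_powr)
    finally have "ln m' / ln t \<le> ((1-l) * ln mA + l * ln mB) / ln t" using lt by (simp add: divide_right_mono)
    moreover have "log_moment_ratio M Y ((1-l)*x+l*y) t = ereal (ln m' / ln t)"
      using m' mt unfolding m_def by (simp add: log_moment_ratio_def)
    ultimately show ?thesis unfolding RHS by simp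
  qed
qed

lemma moment0:
  assumes "prob_space M" shows "abs_moment M Y 0 = 1"
proof -
  have "\<And>x. abs_pow_enn 0 x = 1" by (simp add: abs_pow_enn_def)
  then have "abs_moment M Y 0 = emeasure M (space M)" by (simp add: abs_moment_def)
  then show ?thesis using assms by (simp add: prob_space.emeasure_space_1)
qed

theorem proposition2p1:
  fixes M :: "'a measure" and X :: "real \<Rightarrow> 'a \<Rightarrow> real" and \<tau> :: "real \<Rightarrow> ereal"
  assumes "prob_space M"
    and "\<And>t. t \<ge> 0 \<Longrightarrow> X t \<in> borel_measurable M"
    and lim: "\<And>q. ((\<lambda>t. log_moment_ratio M (X t) q t) \<longlongrightarrow> \<tau> q) at_top"
    and fin: "\<And>q. \<tau> q \<noteq> -\<infinity>"
  defines "D \<equiv> {q. \<tau> q < \<infinity>}"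
  shows
    "(\<forall>x y l. 0 < l \<and> l < 1 \<longrightarrow>
        \<tau> ((1 - l) * x + l * y) \<le> ereal (1 - l) * \<tau> x + ereal l * \<tau> y)
   \<and> (\<forall>p q. p \<in> D - {0} \<and> q \<in> D - {0} \<and> p \<le> q \<longrightarrow>
        real_of_ereal (\<tau> p) / p \<le> real_of_ereal (\<tau> q) / q)
   \<and> (\<forall>q'>0. \<tau> q' \<ge> 0 \<longrightarrow>
        (\<forall>q\<ge>q'. \<tau> q \<ge> 0) \<and>
        (\<forall>p q. p \<in> D \<and> q \<in> D \<and> q' \<le> p \<and> p \<le> q \<longrightarrow> \<tau> p \<le> \<tau> q))
   \<and> ((\<forall>q>0. \<tau> q \<ge> 0) \<longrightarrow>
        (\<forall>p q. p \<in> D \<and> q \<in> D \<and> 0 \<le> p \<and> p \<le> q \<longrightarrow> \<tau> p \<le> \<tau> q))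
   \<and> (\<forall>q<0. \<tau> q \<ge> ereal q * (INF q'\<in>{0<..}. \<tau> q' / ereal q'))
   \<and> (\<forall>q<0. \<tau> q \<ge> - \<tau> (- q))"
proof -
  let ?r = "\<lambda>q t. log_moment_ratio M (X t) q t"
  have z: "\<tau> 0 = 0"
  proof -
    have "\<And>t. ?r 0 t = 0" using moment0[OF assms(1)] by (simp add: log_moment_ratio_def)
    then have "((\<lambda>t. ?r 0 t) \<longlongrightarrow> 0) at_top" by simp
    with lim[of 0] show ?thesis by (intro tendsto_unique[of "at_top :: real filter"]) auto
  qed
  have good: "eventually (\<lambda>t. \<exists>m. abs_moment M (X t) q = ennreal m \<and> m > 0) at_top"
    if "\<tau> q \<noteq> \<infinity>" for q
  proof -
    have "eventually (\<lambda>t. ?r q t \<noteq> \<infinity>) at_top"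
      using lim[of q] that by (rule tendsto_imp_eventually_ne)
    moreover have "eventually (\<lambda>t. ?r q t \<noteq> -\<infinity>) at_top"
      using lim[of q] fin[of q] by (rule tendsto_imp_eventually_ne)
    ultimately show ?thesis
    proof eventually_elim
      case (elim t)
      define m where "m = abs_moment M (X t) q"
      have "m \<noteq> \<infinity>" "m \<noteq> 0" using elim unfolding m_def by (auto simp: log_moment_ratio_def Let_def split: if_splits)
      then have "m = ennreal (enn2real m)" "enn2real m > 0"
        by (auto simp: enn2real_positive_iff less_top zero_less_iff_neq_zero)
      then show ?case unfolding m_def by blast
    qed
  qed
  have cv: "\<tau> ((1 - l) * x + l * y) \<le> ereal (1 - l) * \<tau> x + ereal l * \<tau> y"
    if l: "0 < l" "l < 1" for x y l
  proof (cases "\<tau> x = \<infinity> \<or> \<tau> y = \<infinity>")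
    case True
    have inf: "ereal (1 - l) * \<tau> x + ereal l * \<tau> y = \<infinity>"
      using True l fin[of x] fin[of y] by (cases "\<tau> x"; cases "\<tau> y") auto
    show ?thesis by (subst inf) simp
  next
    case False
    then obtain a b where ab: "\<tau> x = ereal a" "\<tau> y = ereal b" using fin[of x] fin[of y]
      by (cases "\<tau> x"; cases "\<tau> y") auto
    have gx: "eventually (\<lambda>t. \<exists>m. abs_moment M (X t) x = ennreal m \<and> m > 0) at_top"
      using good[of x] False by blast
    have gy: "eventually (\<lambda>t. \<exists>m. abs_moment M (X t) y = ennreal m \<and> m > 0) at_top"
      using good[of y] False by blast
    have ev: "eventually (\<lambda>t. ?r ((1-l)*x+l*y) t \<le> ereal (1-l) * ?r x t + ereal l * ?r y t) at_top"
      using gx gy eventually_gt_at_top[of "1::real"]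
    proof eventually_elim
      case (elim t)
      then obtain mA mB where hA: "abs_moment M (X t) x = ennreal mA" "mA > 0"
        and hB: "abs_moment M (X t) y = ennreal mB" "mB > 0" by blast
      have me: "X t \<in> borel_measurable M" using assms(2) elim by simp
      have t1: "t > 1" using elim by simp
      show ?case by (rule ratio_le[OF me t1 l hA hB])
    qed
    have "((\<lambda>t. ereal (1-l) * ?r x t + ereal l * ?r y t) \<longlongrightarrow> ereal (1-l) * \<tau> x + ereal l * \<tau> y) at_top"
      using ab by (intro tendsto_add_ereal tendsto_cmult_ereal lim) auto
    from tendsto_le[OF _ this lim ev] show ?thesis by simp
  qed
  interpret cvx \<tau> using cv z fin by unfold_locales auto
  have c1: "\<forall>x y l. 0 < l \<and> l < 1 \<longrightarrow>
        \<tau> ((1 - l) * x + l * y) \<le> ereal (1 - l) * \<tau> x + ereal l * \<tau> y"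
    using cv by blast
  show ?thesis unfolding D_def by (rule conjI[OF c1 main])
qed

end
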